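(* Let $M,N\in\mathbb{R}^{(k+n)\times(k+n)}$ be symmetric and assume there exists $\bar Z\in\mathbb{R}^{n\times k}$ with $\begin{bmatrix} I\\ \bar Z\end{bmatrix}^\top N\begin{bmatrix} I\\ \bar Z\end{bmatrix}>0$ (here $I$ is the $k\times k$ identity). Then the following are equivalent: (I) $\begin{bmatrix} I\\ Z\end{bmatrix}^\top M\begin{bmatrix} I\\ Z\end{bmatrix}\ge 0$ for all $Z\in\mathbb{R}^{n\times k}$ with $\begin{bmatrix} I\\ Z\end{bmatrix}^\top N\begin{bmatrix} I\\ Z\end{bmatrix}\ge 0$; (II) $\begin{bmatrix} I\\ Z\end{bmatrix}^\top M\begin{bmatrix} I\\ Z\end{bmatrix}\ge 0$ for all $Z\in\mathbb{R}^{n\times k}$ with $\begin{bmatrix} I\\ Z\end{bmatrix}^\top N\begin{bmatrix} I\\ Z\end{bmatrix}> 0$; (III) there exists a scalar $\alpha\ge 0$ such that $M-\alpha N\ge 0$.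
   Context: For symmetric matrices, $\ge 0$ means positive semidefinite and $>0$ means positive definite. *)

theory Defs
  imports "HOL-Analysis.Analysis"
begin

definition symmetric_mat :: "real^'m^'m \<Rightarrow> bool" where
  "symmetric_mat A \<longleftrightarrow> transpose A = A"

definition psd :: "real^'m^'m \<Rightarrow> bool" where
  "psd A \<longleftrightarrow> symmetric_mat A \<and> (\<forall>x. 0 \<le> x \<bullet> (A *v x))"

definition pd :: "real^'m^'m \<Rightarrow> bool" where
  "pd A \<longleftrightarrow> symmetric_mat A \<and> (\<forall>x. x \<noteq> 0 \<longrightarrow> 0 < x \<bullet> (A *v x))"

text \<open>The block matrix [I; Z] of size (k+n) x k; the row index type is the sum 'k + 'n,
  rows Inl i form the k x k identity, rows Inr j are the rows of Z.\<close>

definition stackI :: "real^'k^'n \<Rightarrow> real^'k^('k + 'n)" where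
  "stackI Z = (\<chi> r. case r of Inl i \<Rightarrow> mat 1 $ i | Inr j \<Rightarrow> Z $ j)"

definition quadform :: "real^('k + 'n)^('k + 'n) \<Rightarrow> real^'k^'n \<Rightarrow> real^'k^'k" where
  "quadform M Z = transpose (stackI Z) ** M ** stackI Z"

end

theory Submission
  imports Defs
begin


definition Q :: "real^'m^'m \<Rightarrow> real^'m \<Rightarrow> real" where
  "Q A v = v \<bullet> (A *v v)"

lemma sym_bil:
  assumes "symmetric_mat A"
  shows "u \<bullet> (A *v v) = v \<bullet> (A *v u)"
proof -
  have "u \<bullet> (A *v v) = u \<bullet> (transpose A *v v)" using assms by (simp add: symmetric_mat_def)
  also have "\<dots> = (v v* A) \<bullet> u" by (simp add: inner_commute)
  also have "\<dots> = v \<bullet> (A *v u)" by (rule dot_lmul_matrix)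
  finally show ?thesis .
qed

lemma Q_add:
  assumes "symmetric_mat A"
  shows "Q A (u + t *\<^sub>R v) = Q A u + 2 * t * (u \<bullet> (A *v v)) + t^2 * Q A v"
  using sym_bil[OF assms, of v u]
  by (simp add: Q_def algebra_simps inner_add_left inner_add_right power2_eq_square)


lemma scaleR_mat_vec: "(a *\<^sub>R (B::real^'m^'n)) *v v = a *\<^sub>R (B *v v)"
  by (simp add: vec_eq_iff matrix_vector_mult_def sum_distrib_left algebra_simps)

lemma Q_diff: "Q (A - a *\<^sub>R B) v = Q A v - a * Q B v"
  by (simp add: Q_def algebra_simps matrix_vector_mult_diff_rdistrib inner_diff_right scaleR_mat_vec)

lemma Q_quad: "x \<bullet> ((transpose P ** A ** P) *v x) = Q A (P *v x)"
proof -
  have "x \<bullet> ((transpose P ** A ** P) *v x) = x \<bullet> (transpose P *v (A *v (P *v x)))"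
    by (simp add: matrix_vector_mul_assoc matrix_mul_assoc)
  also have "\<dots> = ((A *v (P *v x)) v* P) \<bullet> x" by (simp add: inner_commute)
  also have "\<dots> = (A *v (P *v x)) \<bullet> (P *v x)" by (rule dot_lmul_matrix)
  finally show ?thesis by (simp add: Q_def inner_commute)
qed

lemma sym_quad: "symmetric_mat A \<Longrightarrow> symmetric_mat (transpose P ** A ** P)"
  by (simp add: symmetric_mat_def matrix_transpose_mul matrix_mul_assoc)

lemma sym_diff: "symmetric_mat A \<Longrightarrow> symmetric_mat B \<Longrightarrow> symmetric_mat (A - a *\<^sub>R B)"
  unfolding symmetric_mat_def by (simp add: vec_eq_iff transpose_def)



lemma lin_small:
  fixes b c t :: real
  assumes "0 < t" "t \<le> 1"
  shows "\<bar>b*t + c*t^2\<bar> \<le> (\<bar>b\<bar>+\<bar>c\<bar>)*t"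
proof -
  have "\<bar>c*t^2\<bar> \<le> \<bar>c\<bar>*t"
  proof -
    have "t^2 \<le> t" using assms by (simp add: power2_eq_square mult_le_cancel_left1)
    then show ?thesis using assms by (simp add: abs_mult mult_left_mono)
  qed
  moreover have "\<bar>b*t\<bar> = \<bar>b\<bar>*t" using assms by (simp add: abs_mult)
  ultimately show ?thesis by (simp add: distrib_right abs_triangle_ineq order_trans[OF abs_triangle_ineq])
qed

lemma limit_quad:
  fixes a b c \<delta> :: real
  assumes "\<delta> > 0" "\<And>t. 0 < t \<Longrightarrow> t < \<delta> \<Longrightarrow> 0 \<le> a + b*t + c*t^2"
  shows "0 \<le> a"
proof (rule ccontr)
  assume "\<not> 0 \<le> a"
  hence a: "a < 0" by simp
  define t where "t = min (\<delta>/2) (min 1 ((-a)/(2*(\<bar>b\<bar>+\<bar>c\<bar>+1))))"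
  have d: "0 < 2*(\<bar>b\<bar>+\<bar>c\<bar>+1)" by simp
  have p: "0 < (-a)/(2*(\<bar>b\<bar>+\<bar>c\<bar>+1))" using a d by (simp only: divide_pos_pos neg_0_less_iff_less)
  have t0: "0 < t" "t \<le> 1" "t < \<delta>" using p assms(1) by (auto simp: t_def)
  have "t \<le> (-a)/(2*(\<bar>b\<bar>+\<bar>c\<bar>+1))" by (simp add: t_def)
  hence "t * (2*(\<bar>b\<bar>+\<bar>c\<bar>+1)) \<le> -a"
    using d by (simp only: pos_le_divide_eq)
  moreover have "(\<bar>b\<bar>+\<bar>c\<bar>)*t = t * (2*(\<bar>b\<bar>+\<bar>c\<bar>+1)) - t - (\<bar>b\<bar>+\<bar>c\<bar>+1)*t" by (simp add: algebra_simps)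
  moreover have "0 \<le> (\<bar>b\<bar>+\<bar>c\<bar>+1)*t" using t0 by simp
  ultimately have "(\<bar>b\<bar>+\<bar>c\<bar>)*t < -a" using t0 by linarith
  with lin_small[OF t0(1,2), of b c] have "b*t + c*t^2 < -a" by linarith
  with assms(2)[OF t0(1) t0(3)] show False by linarith
qed

lemma small_pos:
  fixes a b c :: real
  assumes "a > 0"
  shows "\<exists>\<delta>>0. \<forall>t. 0 < t \<and> t < \<delta> \<longrightarrow> 0 < a + b*t + c*t^2"
proof (intro exI[of _ "min 1 (a/(\<bar>b\<bar>+\<bar>c\<bar>+1))"] conjI allI impI)
  show "0 < min 1 (a/(\<bar>b\<bar>+\<bar>c\<bar>+1))" using assms by simp
  fix t assume t: "0 < t \<and> t < min 1 (a/(\<bar>b\<bar>+\<bar>c\<bar>+1))"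
  hence t1: "0 < t" "t \<le> 1" by auto
  have "t < a/(\<bar>b\<bar>+\<bar>c\<bar>+1)" using t by simp
  moreover have d: "0 < \<bar>b\<bar>+\<bar>c\<bar>+1" by simp
  ultimately have "t * (\<bar>b\<bar>+\<bar>c\<bar>+1) < a" by (simp only: pos_less_divide_eq)
  moreover have "(\<bar>b\<bar>+\<bar>c\<bar>)*t = t * (\<bar>b\<bar>+\<bar>c\<bar>+1) - t" by (simp add: algebra_simps)
  ultimately have "(\<bar>b\<bar>+\<bar>c\<bar>)*t < a" using t1 by linarith
  with lin_small[OF t1, of b c] show "0 < a + b*t + c*t^2" by linarith
qed

lemma zero_case:
  fixes M N :: "real^'m^'m"
  assumes sM: "symmetric_mat M" and sN: "symmetric_mat N"
    and H: "\<forall>v. Q N v > 0 \<longrightarrow> Q M v \<ge> 0" and vb: "Q N vb > 0"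
    and w: "Q N w = 0"
  shows "Q M w \<ge> 0"
proof -
  define B where "B = w \<bullet> (N *v vb)"
  define \<sigma> :: real where "\<sigma> = (if B \<ge> 0 then 1 else -1)"
  have sB: "\<sigma> * B \<ge> 0" by (simp add: \<sigma>_def B_def)
  have s2: "\<sigma>^2 = 1" by (simp add: \<sigma>_def)
  show ?thesis
  proof (rule limit_quad[of 1 _ "2*\<sigma>*(w \<bullet> (M *v vb))" "Q M vb"])
    fix t :: real assume t: "0 < t" "t < 1"
    have "Q N (w + (\<sigma>*t) *\<^sub>R vb) = 2*t*(\<sigma>*B) + t^2 * Q N vb"
      using Q_add[OF sN, of w "\<sigma>*t" vb] w s2 by (simp add: B_def power_mult_distrib algebra_simps)
    also have "\<dots> > 0" using t sB vb by (simp add: add_nonneg_pos)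
    finally have "Q M (w + (\<sigma>*t) *\<^sub>R vb) \<ge> 0" using H by blast
    thus "0 \<le> Q M w + 2*\<sigma>*(w \<bullet> (M *v vb))*t + Q M vb*t^2"
      using Q_add[OF sM, of w "\<sigma>*t" vb] s2 by (simp add: power_mult_distrib algebra_simps)
  qed simp
qed

lemma lin_nonneg:
  fixes R0 R1 t1 t2 :: real
  assumes "t1 < 0" "0 < t2" "0 \<le> R0 + R1*t1" "0 \<le> R0 + R1*t2"
  shows "0 \<le> R0"
proof (cases "R1 \<ge> 0")
  case True
  hence "R1*t1 \<le> 0" using assms(1) by (simp add: mult_nonneg_nonpos)
  thus ?thesis using assms(3) by linarith
next
  case False
  hence "R1*t2 \<le> 0" using assms(2) by (simp add: mult_nonpos_nonneg)
  thus ?thesis using assms(4) by linarith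
qed

lemma cross_case:
  fixes M N :: "real^'m^'m"
  assumes sM: "symmetric_mat M" and sN: "symmetric_mat N"
    and H: "\<forall>v. Q N v > 0 \<longrightarrow> Q M v \<ge> 0"
    and u: "Q N u < 0" and v: "Q N v > 0"
  shows "Q M u * Q N v - Q M v * Q N u \<ge> 0"
proof -
  define a where "a = Q N v"
  define b where "b = u \<bullet> (N *v v)"
  define c where "c = Q N u"
  define m where "m = Q M u"
  define \<beta> where "\<beta> = u \<bullet> (M *v v)"
  define \<mu> where "\<mu> = Q M v"
  have a0: "a > 0" and c0: "c < 0" using u v by (auto simp: a_def c_def)
  have ac: "a*c < 0" using a0 c0 by (simp add: mult_pos_neg)
  define D where "D = sqrt (b^2 - a*c)"
  have nn: "0 \<le> b^2 - a*c" using ac zero_le_power2[of b] by linarith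
  have D2: "D^2 = b^2 - a*c" unfolding D_def using nn by simp
  have "sqrt (b^2) < D" unfolding D_def using ac by (intro real_sqrt_less_mono) linarith
  hence Db: "\<bar>b\<bar> < D" by simp
  define t1 where "t1 = (-b - D)/a"
  define t2 where "t2 = (-b + D)/a"
  have t1n: "t1 < 0" using Db a0 unfolding t1_def by (simp add: divide_neg_pos)
  have t2p: "t2 > 0" using Db a0 unfolding t2_def by simp
  have root: "c + 2*b*t + a*t^2 = 0" if "t = t1 \<or> t = t2" for t
  proof -
    have "a * (c + 2*b*t + a*t^2) = (a*t + b)^2 - D^2" using D2 by (simp add: power2_eq_square algebra_simps)
    also have "a*t + b = D \<or> a*t + b = -D" using that a0 unfolding t1_def t2_def by (auto simp: field_simps)
    hence "(a*t + b)^2 - D^2 = 0" by auto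
    finally show ?thesis using a0 by simp
  qed
  have r: "0 \<le> (a*m - \<mu>*c) + (2*(a*\<beta> - \<mu>*b))*t" if "t = t1 \<or> t = t2" for t
  proof -
    have qn: "Q N (u + t *\<^sub>R v) = c + 2*b*t + a*t^2"
      using Q_add[OF sN, of u t v] by (simp add: a_def b_def c_def)
    have pm: "Q M (u + t *\<^sub>R v) = m + 2*\<beta>*t + \<mu>*t^2"
      using Q_add[OF sM, of u t v] by (simp add: m_def \<beta>_def \<mu>_def)
    have "Q N (u + t *\<^sub>R v) = 0" using qn root[OF that] by simp
    hence "Q M (u + t *\<^sub>R v) \<ge> 0" using zero_case[OF sM sN H v] by blast
    hence "0 \<le> a * (m + 2*\<beta>*t + \<mu>*t^2)" using a0 pm by simp
    also have "a * (m + 2*\<beta>*t + \<mu>*t^2) = (a*m - \<mu>*c) + (2*(a*\<beta> - \<mu>*b))*t + \<mu> * (c + 2*b*t + a*t^2)"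
      by (simp add: algebra_simps)
    finally show ?thesis using root[OF that] by simp
  qed
  have "0 \<le> a*m - \<mu>*c" using lin_nonneg[OF t1n t2p r r] by simp
  thus ?thesis by (simp add: a_def m_def \<mu>_def c_def mult.commute)
qed

lemma S_lemma:
  fixes M N :: "real^'m^'m"
  assumes sM: "symmetric_mat M" and sN: "symmetric_mat N"
    and H: "\<forall>v. Q N v > 0 \<longrightarrow> Q M v \<ge> 0" and vb: "Q N vb > 0"
  shows "\<exists>\<alpha>::real. \<alpha> \<ge> 0 \<and> psd (M - \<alpha> *\<^sub>R N)"
proof -
  define S where "S = {Q M v / Q N v | v. Q N v > 0}"
  define \<alpha> where "\<alpha> = Inf S"
  have ne: "S \<noteq> {}" using vb by (auto simp: S_def)
  have lb: "\<And>s. s \<in> S \<Longrightarrow> 0 \<le> s" using H by (auto simp: S_def)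
  hence bdd: "bdd_below S" by (meson bdd_below_def)
  have a0: "\<alpha> \<ge> 0" unfolding \<alpha>_def using ne lb by (rule cInf_greatest)
  have "0 \<le> Q (M - \<alpha> *\<^sub>R N) x" for x
  proof -
    consider "Q N x > 0" | "Q N x = 0" | "Q N x < 0" by linarith
    then show ?thesis
    proof cases
      case 1
      hence "\<alpha> \<le> Q M x / Q N x" unfolding \<alpha>_def using bdd by (intro cInf_lower) (auto simp: S_def)
      hence "\<alpha> * Q N x \<le> Q M x" using 1 by (simp add: pos_le_divide_eq)
      thus ?thesis by (simp add: Q_diff)
    next
      case 2
      thus ?thesis using zero_case[OF sM sN H vb] by (simp add: Q_diff)
    next
      case 3
      have "Q M x / Q N x \<le> \<alpha>" unfolding \<alpha>_def using ne
      proof (rule cInf_greatest)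
        fix s assume "s \<in> S"
        then obtain v where v: "Q N v > 0" "s = Q M v / Q N v" by (auto simp: S_def)
        have "Q M x * Q N v - Q M v * Q N x \<ge> 0" using cross_case[OF sM sN H 3 v(1)] .
        hence "Q M v * Q N x \<le> Q M x * Q N v" by simp
        hence "(Q M v * Q N x) / Q N v \<le> Q M x" using v(1) by (simp only: pos_divide_le_eq)
        hence "s * Q N x \<le> Q M x" using v(2) by simp
        thus "Q M x / Q N x \<le> s" using 3 by (simp only: neg_divide_le_eq)
      qed
      hence "\<alpha> * Q N x \<le> Q M x" using 3 by (simp only: neg_divide_le_eq)
      thus ?thesis by (simp add: Q_diff)
    qed
  qed
  thus ?thesis using a0 sym_diff[OF sM sN] by (auto simp: psd_def Q_def)
qed



lemma pd_coercive:
  fixes A :: "real^'k^'k"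
  assumes "pd A"
  shows "\<exists>l>0. \<forall>h. l * (norm h)^2 \<le> h \<bullet> (A *v h)"
proof -
  have pos: "h \<noteq> 0 \<Longrightarrow> 0 < h \<bullet> (A *v h)" for h using assms by (simp add: pd_def)
  have cpt: "compact (sphere (0::real^'k) 1)" by simp
  have ne: "sphere (0::real^'k) 1 \<noteq> {}"
    using vector_choose_size[of 1] by (auto simp: sphere_def)
  have cont: "continuous_on (sphere 0 1) (\<lambda>h::real^'k. h \<bullet> (A *v h))"
    by (intro continuous_intros)
  obtain h0 where h0: "h0 \<in> sphere 0 1" and mn: "\<forall>y\<in>sphere 0 1. h0 \<bullet> (A *v h0) \<le> y \<bullet> (A *v y)"
    using continuous_attains_inf[OF cpt ne cont] by blast
  have "h0 \<noteq> 0" using h0 by auto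
  hence l0: "0 < h0 \<bullet> (A *v h0)" by (rule pos)
  show ?thesis
  proof (intro exI[of _ "h0 \<bullet> (A *v h0)"] conjI allI l0)
    fix h :: "real^'k"
    show "h0 \<bullet> (A *v h0) * (norm h)^2 \<le> h \<bullet> (A *v h)"
    proof (cases "h = 0")
      case True thus ?thesis by simp
    next
      case False
      define g where "g = (1/norm h) *\<^sub>R h"
      have g: "g \<in> sphere 0 1" using False by (simp add: g_def)
      have hg: "h = norm h *\<^sub>R g" using False by (simp add: g_def)
      have "h \<bullet> (A *v h) = (norm h)^2 * (g \<bullet> (A *v g))"
        by (subst hg, subst hg) (simp add: matrix_vector_mult_scaleR power2_eq_square)
      moreover have "h0 \<bullet> (A *v h0) \<le> g \<bullet> (A *v g)" using mn g by blast
      ultimately show ?thesis using mult_right_mono[OF _ zero_le_power2, of "h0 \<bullet> (A *v h0)" "g \<bullet> (A *v g)" "norm h"]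
        by (simp add: mult.commute)
    qed
  qed
qed

lemma stack_apply:
  "stackI Z *v u = (\<chi> r. case r of Inl i \<Rightarrow> u $ i | Inr j \<Rightarrow> (Z *v u) $ j)"
proof -
  have "(stackI Z *v u) $ r = (case r of Inl i \<Rightarrow> u $ i | Inr j \<Rightarrow> (Z *v u) $ j)" for r
  proof (cases r)
    case (Inl i)
    have "(stackI Z *v u) $ r = (mat 1 *v u) $ i"
      by (simp add: Inl matrix_vector_mult_def stackI_def)
    thus ?thesis by (simp add: Inl)
  next
    case (Inr j)
    thus ?thesis by (simp add: matrix_vector_mult_def stackI_def)
  qed
  thus ?thesis by (simp add: vec_eq_iff)
qed



lemma final_ineq:
  fixes l a r p s bb LL :: real
  assumes l: "l > 0" and a: "a > 0" and r: "r \<ge> 0" and rl: "r^2 < a*l"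
    and B: "\<bar>bb\<bar> \<le> r*p" and p: "p \<ge> 0" and L: "LL \<ge> l*p^2"
    and nz: "s \<noteq> 0 \<or> p > 0"
  shows "0 < LL + 2 * s * bb + s^2*a"
proof (cases "s = 0")
  case True
  hence "p > 0" using nz by simp
  hence "0 < l*p^2" using l by simp
  thus ?thesis using True L by simp
next
  case False
  have sB: "-(\<bar>s\<bar>*(r*p)) \<le> s*bb"
  proof -
    have "\<bar>s*bb\<bar> \<le> \<bar>s\<bar>*(r*p)" using B by (simp add: abs_mult mult_left_mono)
    thus ?thesis by linarith
  qed
  have eq: "l*(l*p^2 - 2*\<bar>s\<bar>*r*p + a * s^2) = (l*p - \<bar>s\<bar>*r)^2 + s^2*(a*l - r^2)"
    by (simp add: power2_eq_square algebra_simps abs_mult_self_eq)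
  have "0 < s^2*(a*l - r^2)" using False rl by simp
  moreover have "0 \<le> (l*p - \<bar>s\<bar>*r)^2" by simp
  ultimately have "0 < l*(l*p^2 - 2*\<bar>s\<bar>*r*p + a * s^2)" using eq by linarith
  hence "0 < l*p^2 - 2*\<bar>s\<bar>*r*p + a * s^2" using l by (simp add: zero_less_mult_iff)
  thus ?thesis using sB L by (simp add: algebra_simps)
qed

lemma extend:
  fixes N :: "real^('k::finite+'n::finite)^('k+'n)" and Zb :: "real^'k^'n"
  assumes sN: "symmetric_mat N" and pdb: "pd (quadform N Zb)" and av: "Q N v > 0"
    and x0: "(\<chi> i. v $ Inl i) \<noteq> 0"
  shows "\<exists>Z::real^'k^'n. pd (quadform N Z) \<and> stackI Z *v (\<chi> i. v $ Inl i) = v"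
proof -
  define x :: "real^'k" where "x = (\<chi> i. v $ Inl i)"
  define P where "P = stackI Zb"
  define A where "A = quadform N Zb"
  obtain l where l: "l > 0" and lA: "\<And>h. l * (norm h)^2 \<le> h \<bullet> (A *v h)"
    using pd_coercive[OF pdb] unfolding A_def by blast
  define e' :: "real^'n" where "e' = (\<chi> j. v $ Inr j) - Zb *v x"
  define e :: "real^('k+'n)" where "e = (\<chi> r. case r of Inl i \<Rightarrow> 0 | Inr j \<Rightarrow> e' $ j)"
  have Pxe: "P *v x + e = v"
    by (simp add: vec_eq_iff P_def stack_apply e_def e'_def x_def split: sum.split)
  define a where "a = Q N v"
  have a0: "a > 0" using av by (simp add: a_def)
  define c where "c = transpose P *v (N *v v)"
  have cdot: "c \<bullet> h = (P *v h) \<bullet> (N *v v)" for h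
  proof -
    have "c \<bullet> h = ((N *v v) v* P) \<bullet> h" by (simp add: c_def)
    also have "\<dots> = (N *v v) \<bullet> (P *v h)" by (rule dot_lmul_matrix)
    finally show ?thesis by (simp add: inner_commute)
  qed
  have xnz: "x \<noteq> 0" using x0 by (simp add: x_def)
  define n2 where "n2 = (norm x)^2"
  have n2p: "n2 > 0" using xnz by (simp add: n2_def)
  have xx: "x \<bullet> x = n2" by (simp add: n2_def power2_norm_eq_inner)
  define \<epsilon>0 where "\<epsilon>0 = min 1 (a*l/(1 + n2))"
  have al: "a*l > 0" using a0 l by simp
  have e0p: "0 < \<epsilon>0" "\<epsilon>0 \<le> 1" "\<epsilon>0 \<le> a*l/(1+n2)" using al n2p by (auto simp: \<epsilon>0_def)
  define \<epsilon> where "\<epsilon> = (if c \<bullet> x + \<epsilon>0 * n2 = 0 then \<epsilon>0/2 else \<epsilon>0)"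
  have ep: "0 < \<epsilon>" "\<epsilon> \<le> \<epsilon>0" using e0p by (auto simp: \<epsilon>_def)
  define d where "d = c \<bullet> x + \<epsilon> * n2"
  have dnz: "d \<noteq> 0"
  proof (cases "c \<bullet> x + \<epsilon>0 * n2 = 0")
    case True
    hence "d = - (\<epsilon>0/2) * n2" by (simp add: d_def \<epsilon>_def algebra_simps)
    thus ?thesis using e0p n2p by simp
  next
    case False thus ?thesis by (simp add: d_def \<epsilon>_def)
  qed
  have small: "(\<epsilon> * norm x)^2 < a*l"
  proof -
    have "(\<epsilon> * norm x)^2 = \<epsilon>*\<epsilon>*n2" by (simp add: n2_def power2_eq_square)
    also have "\<dots> \<le> \<epsilon>0 * n2"
    proof -
      have "\<epsilon> \<le> 1" using ep e0p by linarith
      hence "\<epsilon>*\<epsilon> \<le> \<epsilon>" using ep by (simp add: mult_left_le)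
      hence "\<epsilon>*\<epsilon> \<le> \<epsilon>0" using ep by linarith
      thus ?thesis using n2p by (simp add: mult_right_mono)
    qed
    also have "\<dots> \<le> a*l/(1+n2) * n2" by (rule mult_right_mono[OF e0p(3)]) (use n2p in simp)
    also have "\<dots> < a*l"
    proof -
      have "a*l/(1+n2) * n2 = a*l - a*l/(1+n2)" using n2p by (simp add: field_simps)
      moreover have "a*l/(1+n2) > 0" using al n2p by simp
      ultimately show ?thesis by linarith
    qed
    finally show ?thesis .
  qed
  define w where "w = (1/d) *\<^sub>R (c + \<epsilon> *\<^sub>R x)"
  have wx: "w \<bullet> x = 1" using dnz by (simp add: w_def inner_add_left xx d_def)
  define Z :: "real^'k^'n" where "Z = (\<chi> j. \<chi> i. Zb$j$i + e'$j * w$i)"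
  have SZ: "stackI Z *v u = P *v u + (w \<bullet> u) *\<^sub>R e" for u
  proof -
    have Zu: "(Z *v u) $ j = (Zb *v u) $ j + e' $ j * (w \<bullet> u)" for j
      by (simp add: Z_def matrix_vector_mult_def inner_vec_def distrib_right sum.distrib sum_distrib_left mult.assoc)
    show ?thesis by (simp add: vec_eq_iff P_def stack_apply e_def Zu split: sum.split)
  qed
  have Zx: "stackI Z *v x = v" using SZ[of x] wx Pxe by simp
  have sym: "symmetric_mat (quadform N Z)" unfolding quadform_def by (rule sym_quad[OF sN])
  have pos: "0 < u \<bullet> (quadform N Z *v u)" if unz: "u \<noteq> 0" for u
  proof -
    define s where "s = w \<bullet> u"
    define h where "h = u - s *\<^sub>R x"
    have wh: "w \<bullet> h = 0" by (simp add: h_def inner_diff_right wx s_def)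
    have uh: "u = s *\<^sub>R x + h" by (simp add: h_def)
    have img: "stackI Z *v u = P *v h + s *\<^sub>R v"
    proof -
      have i1: "stackI Z *v u = P *v u + s *\<^sub>R e" by (simp add: SZ s_def)
      have i2: "P *v u = P *v h + s *\<^sub>R (P *v x)"
        by (simp add: h_def matrix_vector_mult_diff_distrib matrix_vector_mult_scaleR)
      have "stackI Z *v u = P *v h + s *\<^sub>R (P *v x + e)" using i1 i2 by (simp add: scaleR_right_distrib add.assoc)
      thus ?thesis using Pxe by simp
    qed
    have val: "u \<bullet> (quadform N Z *v u) = Q N (P *v h) + 2 * s * (c \<bullet> h) + s^2 * a"
    proof -
      have "u \<bullet> (quadform N Z *v u) = Q N (stackI Z *v u)" unfolding quadform_def by (rule Q_quad)
      also have "\<dots> = Q N (P *v h + s *\<^sub>R v)" by (simp add: img)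
      also have "\<dots> = Q N (P *v h) + 2 * s * ((P *v h) \<bullet> (N *v v)) + s^2 * Q N v" by (rule Q_add[OF sN])
      finally show ?thesis by (simp add: cdot a_def)
    qed
    have L: "l * (norm h)^2 \<le> Q N (P *v h)"
      using lA[of h] by (simp add: A_def quadform_def Q_quad P_def)
    have ch: "c \<bullet> h = - \<epsilon> * (x \<bullet> h)"
    proof -
      have "(1/d) * ((c + \<epsilon> *\<^sub>R x) \<bullet> h) = 0" using wh by (simp add: w_def)
      hence "(c + \<epsilon> *\<^sub>R x) \<bullet> h = 0" using dnz by simp
      thus ?thesis by (simp add: inner_add_left algebra_simps)
    qed
    have B: "\<bar>c \<bullet> h\<bar> \<le> (\<epsilon> * norm x) * norm h"
    proof -
      have "\<bar>c \<bullet> h\<bar> = \<epsilon> * \<bar>x \<bullet> h\<bar>" using ch ep by (simp add: abs_mult)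
      also have "\<dots> \<le> \<epsilon> * (norm x * norm h)" using ep Cauchy_Schwarz_ineq2[of x h] by (simp add: mult_left_mono)
      finally show ?thesis by (simp add: mult.assoc)
    qed
    have nz: "s \<noteq> 0 \<or> norm h > 0" using unz uh by auto
    show ?thesis unfolding val
      by (rule final_ineq[OF l a0 _ small B norm_ge_zero L nz]) (use ep in simp)
  qed
  have "pd (quadform N Z)" using sym pos by (simp add: pd_def)
  thus ?thesis using Zx unfolding x_def by blast
qed



lemma vec_cond:
  fixes M N :: "real^('k::finite + 'n::finite)^('k + 'n)"
  assumes sM: "symmetric_mat M" and sN: "symmetric_mat N"
    and pdb: "pd (quadform N (Zb :: real^'k^'n))"
    and II: "\<forall>Z :: real^'k^'n. pd (quadform N Z) \<longrightarrow> psd (quadform M Z)"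
  shows "\<forall>v. Q N v > 0 \<longrightarrow> Q M v \<ge> 0"
proof -
  have H1: "Q M v \<ge> 0" if v: "Q N v > 0" "(\<chi> i. v $ Inl i) \<noteq> (0::real^'k)" for v
  proof -
    obtain Z :: "real^'k^'n" where Z: "pd (quadform N Z)" "stackI Z *v (\<chi> i. v $ Inl i) = v"
      using extend[OF sN pdb v] by blast
    have "psd (quadform M Z)" using II Z by blast
    hence "0 \<le> (\<chi> i. v $ Inl i) \<bullet> (quadform M Z *v (\<chi> i. v $ Inl i))" by (simp add: psd_def)
    thus ?thesis unfolding quadform_def Q_quad Z(2) .
  qed
  show ?thesis
  proof (intro allI impI)
    fix v :: "real^('k+'n)" assume v: "Q N v > 0"
    show "Q M v \<ge> 0"
    proof (cases "(\<chi> i. v $ Inl i) = (0::real^'k)")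
      case False thus ?thesis using H1 v by blast
    next
      case True
      define f :: "real^('k+'n)" where "f = axis (Inl (undefined::'k)) 1"
      obtain \<delta> where d: "\<delta> > 0" and dp: "\<forall>t. 0 < t \<and> t < \<delta> \<longrightarrow> 0 < Q N v + (2 * (v \<bullet> (N *v f)))*t + Q N f*t^2"
        using small_pos[OF v] by blast
      show ?thesis
      proof (rule limit_quad[OF d])
        fix t :: real assume t: "0 < t" "t < \<delta>"
        have qn: "Q N (v + t *\<^sub>R f) > 0" using dp t Q_add[OF sN, of v t f] by (simp add: algebra_simps)
        have "(\<chi> i. (v + t *\<^sub>R f) $ Inl i) = t *\<^sub>R axis (undefined::'k) (1::real)"
          using True by (simp add: vec_eq_iff f_def axis_def)
        hence "(\<chi> i. (v + t *\<^sub>R f) $ Inl i) \<noteq> (0::real^'k)" using t by (simp add: axis_eq_0_iff)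
        hence "Q M (v + t *\<^sub>R f) \<ge> 0" using H1 qn by blast
        thus "0 \<le> Q M v + (2 * (v \<bullet> (M *v f)))*t + Q M f*t^2"
          using Q_add[OF sM, of v t f] by (simp add: algebra_simps)
      qed
    qed
  qed
qed

theorem theorem4:
  fixes M N :: "real^('k::finite + 'n::finite)^('k + 'n)"
  assumes "symmetric_mat M" and "symmetric_mat N"
    and "\<exists>Zb :: real^'k^'n. pd (quadform N Zb)"
  shows "((\<forall>Z :: real^'k^'n. psd (quadform N Z) \<longrightarrow> psd (quadform M Z))
          \<longleftrightarrow> (\<forall>Z :: real^'k^'n. pd (quadform N Z) \<longrightarrow> psd (quadform M Z)))
       \<and> ((\<forall>Z :: real^'k^'n. pd (quadform N Z) \<longrightarrow> psd (quadform M Z))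
          \<longleftrightarrow> (\<exists>\<alpha>::real. \<alpha> \<ge> 0 \<and> psd (M - \<alpha> *\<^sub>R N)))"
proof -
  note sM = assms(1) and sN = assms(2)
  obtain Zb :: "real^'k^'n" where pdb: "pd (quadform N Zb)" using assms(3) by blast
  have pd_psd: "pd A \<Longrightarrow> psd A" for A :: "real^'k^'k"
    unfolding pd_def psd_def by (metis inner_zero_left order_refl less_imp_le)
  have I_II: "(\<forall>Z :: real^'k^'n. psd (quadform N Z) \<longrightarrow> psd (quadform M Z))
        \<Longrightarrow> (\<forall>Z :: real^'k^'n. pd (quadform N Z) \<longrightarrow> psd (quadform M Z))"
    using pd_psd by blast
  have II_III: "(\<forall>Z :: real^'k^'n. pd (quadform N Z) \<longrightarrow> psd (quadform M Z))
        \<Longrightarrow> (\<exists>\<alpha>::real. \<alpha> \<ge> 0 \<and> psd (M - \<alpha> *\<^sub>R N))"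
  proof -
    assume II: "\<forall>Z :: real^'k^'n. pd (quadform N Z) \<longrightarrow> psd (quadform M Z)"
    have H: "\<forall>v. Q N v > 0 \<longrightarrow> Q M v \<ge> 0" by (rule vec_cond[OF sM sN pdb II])
    define x0 :: "real^'k" where "x0 = axis undefined 1"
    have "x0 \<noteq> 0" by (simp add: x0_def axis_eq_0_iff)
    hence "0 < x0 \<bullet> (quadform N Zb *v x0)" using pdb by (simp add: pd_def)
    hence vb: "Q N (stackI Zb *v x0) > 0" unfolding quadform_def Q_quad .
    show ?thesis by (rule S_lemma[OF sM sN H vb])
  qed
  have III_I: "(\<exists>\<alpha>::real. \<alpha> \<ge> 0 \<and> psd (M - \<alpha> *\<^sub>R N))
        \<Longrightarrow> (\<forall>Z :: real^'k^'n. psd (quadform N Z) \<longrightarrow> psd (quadform M Z))"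
  proof (intro allI impI)
    fix Z :: "real^'k^'n"
    assume ex: "\<exists>\<alpha>::real. \<alpha> \<ge> 0 \<and> psd (M - \<alpha> *\<^sub>R N)" and pN: "psd (quadform N Z)"
    obtain \<alpha> where a: "\<alpha> \<ge> 0" and pa: "psd (M - \<alpha> *\<^sub>R N)" using ex by blast
    have sym: "symmetric_mat (quadform M Z)" unfolding quadform_def by (rule sym_quad[OF sM])
    have "0 \<le> x \<bullet> (quadform M Z *v x)" for x
    proof -
      have q1: "0 \<le> Q (M - \<alpha> *\<^sub>R N) (stackI Z *v x)" using pa by (simp add: psd_def Q_def)
      have "0 \<le> x \<bullet> (quadform N Z *v x)" using pN by (simp add: psd_def)
      hence q2: "0 \<le> Q N (stackI Z *v x)" unfolding quadform_def Q_quad .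
      have "x \<bullet> (quadform M Z *v x) = Q M (stackI Z *v x)" unfolding quadform_def Q_quad ..
      also have "\<dots> = Q (M - \<alpha> *\<^sub>R N) (stackI Z *v x) + \<alpha> * Q N (stackI Z *v x)"
        by (simp add: Q_diff)
      finally show ?thesis using q1 q2 a by simp
    qed
    thus "psd (quadform M Z)" using sym by (simp add: psd_def)
  qed
  show ?thesis using I_II II_III III_I by blast
qed


end
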